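(* Let $s\ge1$ and for $1\le i\le s$ let $K_i$ be a simplicial complex that is nice on $[n_i]$, with $d_i=\dim K_i$. Put $d=\sum_{i=1}^s d_i+s-1=\dim(K_1*\cdots*K_s)$ and suppose $\sum_{i=1}^s n_i-s-2=2d$. Then for every $i$, $n_i=2d_i+3$ and $K_i$ consists of all subsets of $[n_i]$ of cardinality at most $d_i+1$, i.e. $K_i=(\Delta_{2d_i+2})^{\le d_i}$. Consequently $\mathcal{F}_d=\{(K_1*\cdots*K_s)^d : s\ge1,\ d_i\ge0,\ K_i=(\Delta_{2d_i+2})^{\le d_i},\ \sum_{i=1}^s d_i=d-s+1\}$.
   Context: A simplicial complex is a nonempty family of subsets of a finite vertex set closed under subsets; $\dim F=|F|-1$. A complex $K$ with vertex set identified with a subset of $[n]$ is nice on $[n]$ if for every $F\subseteq[n]$ exactly one of $F$, $[n]\setminus F$ lies in $K$. The join $K_1*K_2$ has vertex set $V(K_1)\sqcup V(K_2)$ and simplices $F_1\sqcup F_2$ with $F_i\in K_i$ (iterated for several factors). $\Delta_m$ is the complex of all subsets of an $(m+1)$-element set and $K^{\le k}$ is the subcomplex of simplices of dimension at most $k$. For a $d$-dimensional complex $K$, $(K)^d$ denotes the $(d+1)$-graph on $V(K)$ whose edges are the $d$-simplices of $K$. $\mathcal{F}_d$ is the family of $(d+1)$-graphs $(K_1*\cdots*K_s)^d$ where $s\ge1$, each $K_i$ is nice on $[n_i]$, $\dim(K_1*\cdots*K_s)=d$, and $n_1+\cdots+n_s=2d+s+2$. *)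

theory Defs
  imports Main
begin

definition simplicial_complex :: "'a set set \<Rightarrow> bool" where
  "simplicial_complex K \<longleftrightarrow> K \<noteq> {} \<and> (\<forall>F\<in>K. finite F) \<and> finite K \<and>
     (\<forall>F\<in>K. \<forall>G. G \<subseteq> F \<longrightarrow> G \<in> K)"

text \<open>Dimension: max of |F| - 1 over simplices (an integer; the complex {{}} has dim -1).\<close>
definition cdim :: "'a set set \<Rightarrow> int" where
  "cdim K = Max ((\<lambda>F. int (card F) - 1) ` K)"

definition verts :: "'a set set \<Rightarrow> 'a set" where
  "verts K = \<Union>K"

definition nice :: "nat \<Rightarrow> nat set set \<Rightarrow> bool" where
  "nice n K \<longleftrightarrow> simplicial_complex K \<and> (\<forall>F\<in>K. F \<subseteq> {1..n}) \<and>
     (\<forall>F. F \<subseteq> {1..n} \<longrightarrow> ((F \<in> K) \<noteq> ({1..n} - F \<in> K)))"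

text \<open>Join of K 0, ..., K (s-1); vertex v of the i-th factor is represented by (i, v).\<close>
definition cjoin :: "nat \<Rightarrow> (nat \<Rightarrow> nat set set) \<Rightarrow> (nat \<times> nat) set set" where
  "cjoin s K = {F. (\<forall>x\<in>F. fst x < s) \<and> (\<forall>i<s. {v. (i, v) \<in> F} \<in> K i)}"

definition simplex :: "nat \<Rightarrow> nat set set" where
  "simplex m = Pow {1..m+1}"

definition skel :: "nat \<Rightarrow> 'a set set \<Rightarrow> 'a set set" where
  "skel k K = {F\<in>K. card F \<le> k + 1}"

text \<open>(K)^d: the (d+1)-graph on V(K) whose edges are the d-simplices, as (vertices, edges).\<close>
definition top_graph :: "nat \<Rightarrow> 'a set set \<Rightarrow> 'a set \<times> 'a set set" where
  "top_graph d K = (verts K, {F\<in>K. card F = d + 1})"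

definition hg_iso :: "'a set \<times> 'a set set \<Rightarrow> 'b set \<times> 'b set set \<Rightarrow> bool" where
  "hg_iso H H' \<longleftrightarrow> (\<exists>f. bij_betw f (fst H) (fst H') \<and> snd H' = (\<lambda>e. f ` e) ` snd H)"

definition famF :: "nat \<Rightarrow> ((nat \<times> nat) set \<times> (nat \<times> nat) set set) set" where
  "famF d = {top_graph d (cjoin s K) | s n K. s \<ge> 1 \<and> (\<forall>i<s. nice (n i) (K i)) \<and>
      cdim (cjoin s K) = int d \<and> (\<Sum>i<s. n i) = 2 * d + s + 2}"

definition famG :: "nat \<Rightarrow> ((nat \<times> nat) set \<times> (nat \<times> nat) set set) set" where
  "famG d = {top_graph d (cjoin s K) | s dd K. s \<ge> 1 \<and>
      (\<forall>i<s. K i = skel (dd i) (simplex (2 * dd i + 2))) \<and>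
      int (\<Sum>i<s. dd i) = int d - int s + 1}"

end

theory Submission
  imports Defs
begin

lemma cdim_ge: "simplicial_complex K \<Longrightarrow> F \<in> K \<Longrightarrow> int (card F) - 1 \<le> cdim K"
  unfolding cdim_def simplicial_complex_def by (intro Max_ge) auto

lemma cdim_ex: "simplicial_complex K \<Longrightarrow> \<exists>F\<in>K. int (card F) - 1 = cdim K"
proof -
  assume a: "simplicial_complex K"
  then have "cdim K \<in> (\<lambda>F. int (card F) - 1) ` K"
    unfolding cdim_def simplicial_complex_def by (intro Max_in) auto
  then show ?thesis by auto
qed

lemma sc_empty: "simplicial_complex K \<Longrightarrow> {} \<in> K"
  unfolding simplicial_complex_def by blast

lemma cdim_ge_m1: "simplicial_complex K \<Longrightarrow> cdim K \<ge> -1"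
  using cdim_ge[of K "{}"] sc_empty by force

lemma nice_le: assumes "nice n K" shows "int n \<le> 2 * cdim K + 3"
proof -
  have sc: "simplicial_complex K" and sub: "\<forall>F\<in>K. F \<subseteq> {1..n}"
    and nc: "\<forall>F. F \<subseteq> {1..n} \<longrightarrow> ((F \<in> K) \<noteq> ({1..n} - F \<in> K))"
    using assms unfolding nice_def by blast+
  obtain M where M: "M \<in> K" "int (card M) - 1 = cdim K" using cdim_ex[OF sc] by blast
  show ?thesis
  proof (cases "int n \<ge> cdim K + 2")
    case True
    then have "nat (cdim K + 2) \<le> card {1..n}" using cdim_ge_m1[OF sc] by simp
    then obtain F where F: "F \<subseteq> {1..n}" "card F = nat (cdim K + 2)" "finite F"
      by (rule obtain_subset_with_card_n)
    have "F \<notin> K"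
    proof
      assume "F \<in> K"
      then have "int (card F) - 1 \<le> cdim K" using cdim_ge[OF sc] by blast
      then show False using F(2) cdim_ge_m1[OF sc] by linarith
    qed
    moreover have "(F \<in> K) \<noteq> ({1..n} - F \<in> K)" using nc F(1) by blast
    ultimately have "{1..n} - F \<in> K" by blast
    then have "int (card ({1..n} - F)) - 1 \<le> cdim K" using cdim_ge[OF sc] by blast
    moreover have "card ({1..n} - F) = n - card F"
      using F(1) by (simp add: card_Diff_subset finite_subset)
    moreover have "card F \<le> n" using F(1) card_mono[of "{1..n}" F] by simp
    ultimately show ?thesis using F(2) True cdim_ge_m1[OF sc] by linarith
  next
    case False
    have "M \<subseteq> {1..n}" using sub M by auto
    then have cm: "card M \<le> n" using card_mono[of "{1..n}" M] by simp
    then have "card M = n" using False M(2) by linarith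
    then have "M = {1..n}" using \<open>M \<subseteq> {1..n}\<close> by (simp add: card_subset_eq)
    then have "{1..n} \<in> K" using M by simp
    moreover have "{} \<in> K" using sc_empty[OF sc] .
    moreover have "({} \<in> K) \<noteq> ({1..n} - {} \<in> K)" using nc by blast
    ultimately show ?thesis by simp
  qed
qed

lemma nice_char:
  assumes "nice n K" "int n = 2 * cdim K + 3"
  shows "K = {F. F \<subseteq> {1..n} \<and> int (card F) \<le> cdim K + 1}"
proof -
  have sc: "simplicial_complex K" and sub: "\<forall>F\<in>K. F \<subseteq> {1..n}"
    and nc: "\<forall>F. F \<subseteq> {1..n} \<longrightarrow> ((F \<in> K) \<noteq> ({1..n} - F \<in> K))"
    using assms unfolding nice_def by blast+
  show ?thesis
  proof (intro equalityI subsetI)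
    fix F assume "F \<in> K" then show "F \<in> {F. F \<subseteq> {1..n} \<and> int (card F) \<le> cdim K + 1}"
      using sub cdim_ge[OF sc, of F] by simp
  next
    fix F assume F: "F \<in> {F. F \<subseteq> {1..n} \<and> int (card F) \<le> cdim K + 1}"
    then have Fs: "F \<subseteq> {1..n}" by simp
    have "card ({1..n} - F) = n - card F"
      using Fs by (simp add: card_Diff_subset finite_subset)
    moreover have "card F \<le> n" using Fs card_mono[of "{1..n}" F] by simp
    ultimately have "int (card ({1..n} - F)) - 1 > cdim K" using F assms(2) by simp
    then have "{1..n} - F \<notin> K" using cdim_ge[OF sc, of "{1..n} - F"] by linarith
    moreover have "(F \<in> K) \<noteq> ({1..n} - F \<in> K)" using nc Fs by blast
    ultimately show "F \<in> K" by blast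
  qed
qed

lemma skel_eq: "skel dd (simplex (2*dd+2)) = {F. F \<subseteq> {1..2*dd+3} \<and> card F \<le> dd + 1}"
  unfolding skel_def simplex_def by auto

lemma skel_nice: "nice (2*dd+3) (skel dd (simplex (2*dd+2)))"
proof -
  define S where "S = {F. F \<subseteq> {1..2*dd+3} \<and> card F \<le> dd + 1}"
  have S: "skel dd (simplex (2*dd+2)) = S" unfolding S_def by (rule skel_eq)
  have e: "{} \<in> S" unfolding S_def by simp
  have fS: "finite S"
    by (rule finite_subset[of _ "Pow {1..2*dd+3}"]) (auto simp: S_def)
  have ff: "\<forall>F\<in>S. finite F" unfolding S_def using finite_subset by blast
  have cl: "\<forall>F\<in>S. \<forall>G. G \<subseteq> F \<longrightarrow> G \<in> S"
  proof (intro ballI allI impI)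
    fix F G assume F: "F \<in> S" and G: "G \<subseteq> F"
    have "finite F" using F ff by blast
    then have "card G \<le> card F" using G card_mono by blast
    then show "G \<in> S" using F G unfolding S_def by auto
  qed
  have sub: "\<forall>F\<in>S. F \<subseteq> {1..2*dd+3}" unfolding S_def by blast
  have cmp: "(F \<in> S) \<noteq> ({1..2*dd+3} - F \<in> S)" if Fs: "F \<subseteq> {1..2*dd+3}" for F
  proof -
    have c: "card ({1..2*dd+3} - F) = 2*dd+3 - card F"
      using Fs by (simp add: card_Diff_subset finite_subset)
    have cF: "card F \<le> 2*dd+3" using Fs card_mono[of "{1..2*dd+3}" F] by simp
    have a1: "(F \<in> S) = (card F \<le> dd + 1)" using Fs unfolding S_def by blast
    have a2: "({1..2*dd+3} - F \<in> S) = (card ({1..2*dd+3} - F) \<le> dd + 1)" unfolding S_def by blast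
    show ?thesis unfolding a1 a2 c using cF by linarith
  qed
  show ?thesis unfolding nice_def simplicial_complex_def S
    using e fS ff cl sub cmp by blast
qed

lemma skel_cdim: "cdim (skel dd (simplex (2*dd+2))) = int dd"
proof -
  have sc: "simplicial_complex (skel dd (simplex (2*dd+2)))" using skel_nice nice_def by blast
  have "{1..dd+1} \<in> skel dd (simplex (2*dd+2))" unfolding skel_eq by simp
  then have "int (card {1..dd+1}) - 1 \<le> cdim (skel dd (simplex (2*dd+2)))" using cdim_ge[OF sc] by blast
  then have 1: "int dd \<le> cdim (skel dd (simplex (2*dd+2)))" by simp
  obtain F where F: "F \<in> skel dd (simplex (2*dd+2))" "int (card F) - 1 = cdim (skel dd (simplex (2*dd+2)))"
    using cdim_ex[OF sc] by blast
  have "card F \<le> dd + 1" using F(1) unfolding skel_eq by simp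
  then show ?thesis using 1 F(2) by linarith
qed

lemma cjoin_decomp: "F \<in> cjoin s K \<Longrightarrow> F = (SIGMA i:{..<s}. {v. (i, v) \<in> F})"
  unfolding cjoin_def by auto

lemma cjoin_sub: assumes "\<forall>i<s. simplicial_complex (K i)"
  shows "cjoin s K \<subseteq> Pow (SIGMA i:{..<s}. \<Union>(K i))"
proof
  fix F assume F: "F \<in> cjoin s K"
  have "F \<subseteq> (SIGMA i:{..<s}. \<Union>(K i))"
  proof
    fix x assume "x \<in> F"
    obtain i v where xe: "x = (i, v)" by (cases x)
    have x: "x = (i, v)" "i < s" "(i,v) \<in> F" using F \<open>x \<in> F\<close> xe unfolding cjoin_def by auto
    then have "{v. (i, v) \<in> F} \<in> K i" using F unfolding cjoin_def by auto
    then show "x \<in> (SIGMA i:{..<s}. \<Union>(K i))" using x by blast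
  qed
  then show "F \<in> Pow (SIGMA i:{..<s}. \<Union>(K i))" by simp
qed

lemma cjoin_sc: assumes "\<forall>i<s. simplicial_complex (K i)"
  shows "finite (cjoin s K)" "\<forall>F\<in>cjoin s K. finite F" "{} \<in> cjoin s K"
proof -
  have fin: "finite (SIGMA i:{..<s}. \<Union>(K i))"
    using assms unfolding simplicial_complex_def by (intro finite_SigmaI) auto
  show "finite (cjoin s K)" using cjoin_sub[OF assms] fin
    by (rule finite_subset[OF _ iffD2[OF finite_Pow_iff]])
  show "\<forall>F\<in>cjoin s K. finite F"
  proof
    fix F assume "F \<in> cjoin s K"
    then have "F \<subseteq> (SIGMA i:{..<s}. \<Union>(K i))" using cjoin_sub[OF assms] by blast
    then show "finite F" using fin by (rule finite_subset)
  qed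
  show "{} \<in> cjoin s K" unfolding cjoin_def using assms sc_empty by auto
qed

lemma cjoin_cdim: assumes sc: "\<forall>i<s. simplicial_complex (K i)"
  shows "cdim (cjoin s K) = (\<Sum>i<s. cdim (K i)) + int s - 1"
proof -
  note cs = cjoin_sc[OF sc]
  have le: "int (card F) - 1 \<le> (\<Sum>i<s. cdim (K i)) + int s - 1" if F: "F \<in> cjoin s K" for F
  proof -
    have sl: "\<forall>i<s. {v. (i, v) \<in> F} \<in> K i" using F unfolding cjoin_def by blast
    have fsl: "\<forall>i\<in>{..<s}. finite {v. (i, v) \<in> F}"
    proof
      fix i assume "i \<in> {..<s}"
      then have "i < s" by simp
      then show "finite {v. (i, v) \<in> F}" using sl sc unfolding simplicial_complex_def by blast
    qed
    have e: "F = (SIGMA i:{..<s}. {v. (i, v) \<in> F})" by (rule cjoin_decomp[OF F])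
    have "card F = card (SIGMA i:{..<s}. {v. (i, v) \<in> F})" using e by (rule arg_cong)
    also have "\<dots> = (\<Sum>i<s. card {v. (i, v) \<in> F})" by (rule card_SigmaI[OF finite_lessThan fsl])
    finally have "int (card F) = (\<Sum>i<s. int (card {v. (i, v) \<in> F}))" by simp
    also have "\<dots> \<le> (\<Sum>i<s. cdim (K i) + 1)"
    proof (rule sum_mono)
      fix i assume "i \<in> {..<s}"
      then have "i < s" by simp
      then have "int (card {v. (i, v) \<in> F}) - 1 \<le> cdim (K i)" using sl sc cdim_ge by blast
      then show "int (card {v. (i, v) \<in> F}) \<le> cdim (K i) + 1" by linarith
    qed
    also have "\<dots> = (\<Sum>i<s. cdim (K i)) + int s" by (simp add: sum.distrib)
    finally show ?thesis by linarith
  qed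
  have "\<forall>i. \<exists>F. i < s \<longrightarrow> F \<in> K i \<and> int (card F) - 1 = cdim (K i)"
    using cdim_ex sc by blast
  then obtain M where M: "\<forall>i. i < s \<longrightarrow> M i \<in> K i \<and> int (card (M i)) - 1 = cdim (K i)"
    using choice[of "\<lambda>i F. i < s \<longrightarrow> F \<in> K i \<and> int (card F) - 1 = cdim (K i)"] by blast
  define F where "F = (SIGMA i:{..<s}. M i)"
  have sl: "\<forall>i<s. {v. (i, v) \<in> F} = M i" unfolding F_def by blast
  have Fin: "F \<in> cjoin s K" unfolding cjoin_def
  proof (intro CollectI conjI ballI allI impI)
    fix x assume "x \<in> F" then show "fst x < s" unfolding F_def by auto
  next
    fix i assume "i < s" then show "{v. (i, v) \<in> F} \<in> K i" using sl M by simp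
  qed
  have fM: "\<forall>i\<in>{..<s}. finite (M i)"
  proof
    fix i assume "i \<in> {..<s}"
    then have "i < s" by simp
    then show "finite (M i)" using M sc unfolding simplicial_complex_def by blast
  qed
  have "card F = (\<Sum>i<s. card (M i))"
    unfolding F_def by (rule card_SigmaI[OF finite_lessThan fM])
  then have "int (card F) = (\<Sum>i<s. int (card (M i)))" by simp
  also have "\<dots> = (\<Sum>i<s. cdim (K i) + 1)"
    using M by (intro sum.cong) force+
  also have "\<dots> = (\<Sum>i<s. cdim (K i)) + int s" by (simp add: sum.distrib)
  finally have Fc: "int (card F) - 1 = (\<Sum>i<s. cdim (K i)) + int s - 1" by linarith
  show ?thesis unfolding cdim_def[of "cjoin s K"]
  proof (rule Max_eqI)
    show "finite ((\<lambda>F. int (card F) - 1) ` cjoin s K)" using cs(1) by simp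
    fix y assume "y \<in> (\<lambda>F. int (card F) - 1) ` cjoin s K"
    then obtain G where "G \<in> cjoin s K" "y = int (card G) - 1" by blast
    then show "y \<le> (\<Sum>i<s. cdim (K i)) + int s - 1" using le by blast
  next
    show "(\<Sum>i<s. cdim (K i)) + int s - 1 \<in> (\<lambda>F. int (card F) - 1) ` cjoin s K"
      using Fin Fc by (metis image_eqI)
  qed
qed

lemma hg_iso_image:
  assumes inj: "inj_on \<phi> (\<Union>C)" and C': "C' = (\<lambda>F. \<phi> ` F) ` C"
  shows "hg_iso (top_graph e C) (top_graph e C')"
  unfolding hg_iso_def top_graph_def verts_def
proof (intro exI conjI)
  show "bij_betw \<phi> (fst (\<Union> C, {F \<in> C. card F = e + 1})) (fst (\<Union> C', {F \<in> C'. card F = e + 1}))"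
    using inj C' by (auto simp: bij_betw_def)
  have ci: "card (\<phi> ` F) = card F" if "F \<in> C" for F
    using inj that by (meson Union_upper card_image inj_on_subset)
  show "snd (\<Union> C', {F \<in> C'. card F = e + 1}) = (`) \<phi> ` snd (\<Union> C, {F \<in> C. card F = e + 1})"
    using ci C' by auto
qed


lemma part1:
  assumes "\<forall>i<s. nice (n i) (K i)"
    and "(\<Sum>i<s. int (n i)) = 2 * (\<Sum>i<s. cdim (K i)) + 3 * int s"
  shows "\<forall>i<s. int (n i) = 2 * cdim (K i) + 3 \<and>
              K i = {F. F \<subseteq> {1..n i} \<and> int (card F) \<le> cdim (K i) + 1}"
proof -
  have nn: "\<forall>i\<in>{..<s}. 0 \<le> 2 * cdim (K i) + 3 - int (n i)"
  proof
    fix i assume "i \<in> {..<s}"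
    then have "nice (n i) (K i)" using assms(1) by simp
    from nice_le[OF this] show "0 \<le> 2 * cdim (K i) + 3 - int (n i)" by linarith
  qed
  have "(\<Sum>i<s. 2 * cdim (K i) + 3 - int (n i)) = (\<Sum>i<s. 2 * cdim (K i)) + (\<Sum>i<s. 3) - (\<Sum>i<s. int (n i))"
    by (simp only: sum_subtractf sum.distrib)
  also have "\<dots> = 2 * (\<Sum>i<s. cdim (K i)) + 3 * int s - (\<Sum>i<s. int (n i))"
    by (simp add: sum_distrib_left)
  finally have s0: "(\<Sum>i<s. 2 * cdim (K i) + 3 - int (n i)) = 0" using assms(2) by linarith
  have eq: "((\<Sum>i<s. 2 * cdim (K i) + 3 - int (n i)) = 0) = (\<forall>i\<in>{..<s}. 2 * cdim (K i) + 3 - int (n i) = 0)"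
    by (rule sum_nonneg_eq_0_iff[OF finite_lessThan]) (use nn in blast)
  have z: "\<forall>i<s. int (n i) = 2 * cdim (K i) + 3"
  proof (intro allI impI)
    fix i assume "i < s"
    then have "i \<in> {..<s}" by simp
    then have "2 * cdim (K i) + 3 - int (n i) = 0" using eq s0 by blast
    then show "int (n i) = 2 * cdim (K i) + 3" by linarith
  qed
  show ?thesis
  proof (intro allI impI conjI)
    fix i assume i: "i < s"
    show "int (n i) = 2 * cdim (K i) + 3" using z i by blast
    show "K i = {F. F \<subseteq> {1..n i} \<and> int (card F) \<le> cdim (K i) + 1}"
      by (rule nice_char) (use z i assms(1) in blast)+
  qed
qed

lemma reindex:
  assumes hg1: "\<forall>k<s'. h k \<in> J \<and> g (h k) = k"
    and hg2: "\<forall>j\<in>J. g j < s' \<and> h (g j) = j"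
    and J: "J \<subseteq> {..<s}"
    and Ke: "\<forall>i<s. i \<notin> J \<longrightarrow> K i = {{}}"
  shows "cjoin s' (\<lambda>k. K (h k)) = (\<lambda>F. (\<lambda>(j, v). (g j, v)) ` F) ` cjoin s K"
proof (rule equalityI)
  show "(\<lambda>F. (\<lambda>(j, v). (g j, v)) ` F) ` cjoin s K \<subseteq> cjoin s' (\<lambda>k. K (h k))"
  proof (rule image_subsetI)
  fix F assume F: "F \<in> cjoin s K"
  have inJ: "j \<in> J" if "(j, v) \<in> F" for j v
  proof (rule ccontr)
    assume "j \<notin> J"
    moreover have "j < s" using F that unfolding cjoin_def by force
    ultimately have "{v. (j, v) \<in> F} = {}" using F Ke unfolding cjoin_def by auto
    then show False using that by auto
  qed
  define G where "G = (\<lambda>(j, v). (g j, v)) ` F"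
  have "G \<in> cjoin s' (\<lambda>k. K (h k))"
    unfolding cjoin_def
  proof (intro CollectI conjI allI impI ballI)
    fix x assume "x \<in> G" then show "fst x < s'" unfolding G_def using inJ hg2 by auto
  next
    fix k assume k: "k < s'"
    have "{v. (k, v) \<in> G} = {v. (h k, v) \<in> F}"
    proof (intro equalityI subsetI)
      fix v assume "v \<in> {v. (k, v) \<in> G}"
      then obtain j where "(j, v) \<in> F" "g j = k" unfolding G_def by auto
      then show "v \<in> {v. (h k, v) \<in> F}" using inJ hg2 by force
    next
      fix v assume "v \<in> {v. (h k, v) \<in> F}"
      then show "v \<in> {v. (k, v) \<in> G}" unfolding G_def using hg1 k
        by (auto intro!: image_eqI[where x="(h k, v)"])
    qed
    moreover have "h k < s" using hg1 J k by auto
    ultimately show "{v. (k, v) \<in> G} \<in> K (h k)" using F unfolding cjoin_def by auto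
  qed
  then show "(\<lambda>(j, v). (g j, v)) ` F \<in> cjoin s' (\<lambda>k. K (h k))" unfolding G_def .
  qed
next
  show "cjoin s' (\<lambda>k. K (h k)) \<subseteq> (\<lambda>F. (\<lambda>(j, v). (g j, v)) ` F) ` cjoin s K"
  proof
  fix G assume G: "G \<in> cjoin s' (\<lambda>k. K (h k))"
  define F where "F = (\<lambda>(k, v). (h k, v)) ` G"
  have Gs: "\<forall>x\<in>G. fst x < s'" using G unfolding cjoin_def by auto
  have "G = (\<lambda>(j, v). (g j, v)) ` F"
  proof (intro equalityI subsetI)
    fix x assume x: "x \<in> G"
    obtain k v where xk: "x = (k, v)" by force
    then have kv: "(k, v) \<in> G" using x by simp
    then have "(h k, v) \<in> F" unfolding F_def by (rule rev_image_eqI) simp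
    moreover have "k < s'" using Gs kv by force
    then have "x = (\<lambda>(j, v). (g j, v)) (h k, v)" using xk hg1 by simp
    ultimately show "x \<in> (\<lambda>(j, v). (g j, v)) ` F" by (rule rev_image_eqI)
  next
    fix x assume "x \<in> (\<lambda>(j, v). (g j, v)) ` F"
    then show "x \<in> G" unfolding F_def using Gs hg1 by auto
  qed
  moreover have "F \<in> cjoin s K" unfolding cjoin_def
  proof (intro CollectI conjI allI impI ballI)
    fix x assume "x \<in> F"
    then obtain a b where ab: "(a, b) \<in> G" "x = (h a, b)" unfolding F_def by auto
    then have "a < s'" using Gs by force
    then have "h a \<in> J" using hg1 by blast
    then show "fst x < s" using ab J by auto
  next
    fix i assume i: "i < s"
    show "{v. (i, v) \<in> F} \<in> K i"
    proof (cases "i \<in> J")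
      case True
      have "{v. (i, v) \<in> F} = {v. (g i, v) \<in> G}"
      proof (intro equalityI subsetI)
        fix v assume "v \<in> {v. (i, v) \<in> F}"
        then obtain k where "(k, v) \<in> G" "h k = i" unfolding F_def by auto
        then show "v \<in> {v. (g i, v) \<in> G}" using Gs hg1 by force
      next
        fix v assume "v \<in> {v. (g i, v) \<in> G}"
        then show "v \<in> {v. (i, v) \<in> F}" unfolding F_def using hg2 True
          by (auto intro!: image_eqI[where x="(g i, v)"])
      qed
      moreover have "{v. (g i, v) \<in> G} \<in> K (h (g i))" using G hg2 True unfolding cjoin_def by auto
      ultimately show ?thesis using hg2 True by simp
    next
      case False
      then have "{v. (i, v) \<in> F} = {}" unfolding F_def using Gs hg1 by auto
      then show ?thesis using Ke i False by simp
    qed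
  qed
  ultimately show "G \<in> (\<lambda>F. (\<lambda>(j, v). (g j, v)) ` F) ` cjoin s K" by blast
  qed
qed


lemma G_to_F: assumes "H' \<in> famG e" shows "\<exists>H\<in>famF e. hg_iso H' H"
proof -
  obtain s dd K where H': "H' = top_graph e (cjoin s K)" and s: "s \<ge> 1"
    and K: "\<forall>i<s. K i = skel (dd i) (simplex (2 * dd i + 2))"
    and sm: "int (\<Sum>i<s. dd i) = int e - int s + 1"
    using assms unfolding famG_def by blast
  define n where "n = (\<lambda>i. 2 * dd i + 3)"
  have nc: "\<forall>i<s. nice (n i) (K i)" using K skel_nice unfolding n_def by simp
  have sc: "\<forall>i<s. simplicial_complex (K i)" using nc nice_def by blast
  have "cdim (cjoin s K) = (\<Sum>i<s. int (dd i)) + int s - 1"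
    using cjoin_cdim[OF sc] K skel_cdim by simp
  then have cd: "cdim (cjoin s K) = int e" using sm by simp
  have "int (\<Sum>i<s. n i) = 2 * int (\<Sum>i<s. dd i) + 3 * int s"
    unfolding n_def by (simp add: sum.distrib sum_distrib_left)
  then have "(\<Sum>i<s. n i) = 2 * e + s + 2" using sm by linarith
  then have "H' \<in> famF e" unfolding famF_def H' using s nc cd by blast
  moreover have "hg_iso H' H'" unfolding H' by (rule hg_iso_image[where \<phi>=id]) auto
  ultimately show ?thesis by blast
qed

lemma F_to_G: assumes "H \<in> famF e" shows "\<exists>H'\<in>famG e. hg_iso H H'"
proof -
  obtain s n K where H: "H = top_graph e (cjoin s K)" and s: "s \<ge> 1"
    and nc: "\<forall>i<s. nice (n i) (K i)" and cd: "cdim (cjoin s K) = int e"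
    and sm: "(\<Sum>i<s. n i) = 2 * e + s + 2"
    using assms unfolding famF_def by blast
  define D where "D = (\<lambda>i. cdim (K i))"
  have sc: "\<forall>i<s. simplicial_complex (K i)" using nc nice_def by blast
  have eD: "int e = (\<Sum>i<s. D i) + int s - 1" using cjoin_cdim[OF sc] cd D_def by simp
  have "int (\<Sum>i<s. n i) = 2 * int e + int s + 2" using sm by simp
  then have "(\<Sum>i<s. int (n i)) = 2 * (\<Sum>i<s. cdim (K i)) + 3 * int s" using eD D_def by simp
  from part1[OF nc this] have P: "\<forall>i<s. int (n i) = 2 * D i + 3 \<and>
              K i = {F. F \<subseteq> {1..n i} \<and> int (card F) \<le> D i + 1}" unfolding D_def .
  define J where "J = {i. i < s \<and> D i \<ge> 0}"
  have Js: "J \<subseteq> {..<s}" and finJ: "finite J" unfolding J_def by auto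
  define s' where "s' = card J"
  obtain h where h: "bij_betw h {..<s'} J" using ex_bij_betw_nat_finite[OF finJ]
    unfolding s'_def atLeast0LessThan by blast
  define g where "g = the_inv_into {..<s'} h"
  have hinj: "inj_on h {..<s'}" using h unfolding bij_betw_def by blast
  have hg1: "\<forall>k<s'. h k \<in> J \<and> g (h k) = k"
  proof (intro allI impI conjI)
    fix k assume "k < s'"
    then have k: "k \<in> {..<s'}" by simp
    show "h k \<in> J" using bij_betwE[OF h] k by blast
    show "g (h k) = k" unfolding g_def by (rule the_inv_into_f_f[OF hinj k])
  qed
  have hg2: "\<forall>j\<in>J. g j < s' \<and> h (g j) = j"
  proof (intro ballI conjI)
    fix j assume j: "j \<in> J"
    have "g j \<in> {..<s'}" using bij_betwE[OF bij_betw_the_inv_into[OF h]] j unfolding g_def by blast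
    then show "g j < s'" by simp
    show "h (g j) = j" unfolding g_def by (rule f_the_inv_into_f_bij_betw[OF h j])
  qed
  have Dm: "\<forall>i<s. i \<notin> J \<longrightarrow> D i = -1" using cdim_ge_m1 sc unfolding J_def D_def by force
  have Ke: "\<forall>i<s. i \<notin> J \<longrightarrow> K i = {{}}"
  proof (intro allI impI)
    fix i assume i: "i < s" "i \<notin> J"
    have Di: "D i = -1" using Dm i by blast
    have Pi: "int (n i) = 2 * D i + 3" "K i = {F. F \<subseteq> {1..n i} \<and> int (card F) \<le> D i + 1}"
      using P i(1) by blast+
    have ni: "n i = 1" using Pi(1) Di by linarith
    have "K i = {F. F \<subseteq> {1..n i} \<and> int (card F) \<le> D i + 1}" by (rule Pi(2))
    also have "\<dots> = {{}}"
    proof (intro equalityI subsetI)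
      fix F assume "F \<in> {F. F \<subseteq> {1..n i} \<and> int (card F) \<le> D i + 1}"
      then have "F \<subseteq> {1..1}" "card F = 0" using ni Di by auto
      then show "F \<in> {{}}" using finite_subset[of F "{1..1::nat}"] by auto
    next
      fix F assume "F \<in> {{}::nat set}"
      then show "F \<in> {F. F \<subseteq> {1..n i} \<and> int (card F) \<le> D i + 1}" using Di by simp
    qed
    finally show "K i = {{}}" .
  qed
  define K' where "K' = (\<lambda>k. K (h k))"
  define dd where "dd = (\<lambda>k. nat (D (h k)))"
  have K': "\<forall>k<s'. K' k = skel (dd k) (simplex (2 * dd k + 2))"
  proof (intro allI impI)
    fix k assume k: "k < s'"
    then have hk: "h k < s" "D (h k) \<ge> 0" using hg1 unfolding J_def by auto
    have Pk: "int (n (h k)) = 2 * D (h k) + 3"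
      "K (h k) = {F. F \<subseteq> {1..n (h k)} \<and> int (card F) \<le> D (h k) + 1}"
      using P hk(1) by blast+
    have ddk: "int (dd k) = D (h k)" unfolding dd_def using hk(2) by simp
    have nk: "n (h k) = 2 * dd k + 3" using Pk(1) ddk by linarith
    have "K' k = {F. F \<subseteq> {1..n (h k)} \<and> int (card F) \<le> D (h k) + 1}" unfolding K'_def by (rule Pk(2))
    also have "\<dots> = {F. F \<subseteq> {1..2 * dd k + 3} \<and> card F \<le> dd k + 1}"
      unfolding nk ddk[symmetric] by (intro Collect_cong conj_cong refl) linarith
    finally show "K' k = skel (dd k) (simplex (2 * dd k + 2))" unfolding skel_eq .
  qed
  have "(\<Sum>k<s'. int (dd k)) = (\<Sum>k<s'. D (h k))"
  proof (rule sum.cong)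
    fix k assume "k \<in> {..<s'}"
    then have "h k \<in> J" using hg1 by simp
    then have "D (h k) \<ge> 0" unfolding J_def by blast
    then show "int (dd k) = D (h k)" unfolding dd_def by simp
  qed simp
  also have "\<dots> = (\<Sum>j\<in>J. D j)" by (rule sum.reindex_bij_betw[OF h])
  finally have s1: "(\<Sum>k<s'. int (dd k)) = (\<Sum>j\<in>J. D j)" .
  have "(\<Sum>i<s. D i) = (\<Sum>i\<in>{..<s}-J. D i) + (\<Sum>j\<in>J. D j)"
    by (rule sum.subset_diff[OF Js finite_lessThan])
  also have "(\<Sum>i\<in>{..<s}-J. D i) = (\<Sum>i\<in>{..<s}-J. -1)"
  proof (rule sum.cong)
    fix i assume "i \<in> {..<s}-J"
    then show "D i = -1" using Dm by simp
  qed simp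
  also have "\<dots> = - int (card ({..<s}-J))" by simp
  also have "card ({..<s}-J) = s - s'" unfolding s'_def using Js finJ by (simp add: card_Diff_subset)
  finally have s2: "(\<Sum>i<s. D i) = (\<Sum>j\<in>J. D j) - int (s - s')" by linarith
  have "s' \<le> s" unfolding s'_def using card_mono[OF finite_lessThan Js] by simp
  have s'1: "s' \<ge> 1"
  proof (rule ccontr)
    assume "\<not> s' \<ge> 1"
    then have "s' = 0" by simp
    then have "J = {}" unfolding s'_def using finJ by simp
    then have "(\<Sum>j\<in>J. D j) = 0" by simp
    then show False using s2 eD \<open>s' = 0\<close> by linarith
  qed
  have "int (\<Sum>k<s'. dd k) = (\<Sum>k<s'. int (dd k))" by simp
  then have sumdd: "int (\<Sum>k<s'. dd k) = int e - int s' + 1" using s1 s2 eD \<open>s' \<le> s\<close> by linarith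
  have G: "top_graph e (cjoin s' K') \<in> famG e" unfolding famG_def using s'1 K' sumdd by blast
  have U: "\<Union>(cjoin s K) \<subseteq> J \<times> UNIV"
  proof
    fix x assume "x \<in> \<Union>(cjoin s K)"
    then obtain F where F: "F \<in> cjoin s K" "x \<in> F" by blast
    obtain j v where xe: "x = (j, v)" by (cases x)
    have jv: "(j, v) \<in> F" using F xe by simp
    have js: "j < s" using F jv unfolding cjoin_def by force
    have "{v. (j, v) \<in> F} \<in> K j" using F js unfolding cjoin_def by blast
    moreover have "{v. (j, v) \<in> F} \<noteq> {}" using jv by blast
    ultimately have "j \<in> J" using Ke js by force
    then show "x \<in> J \<times> UNIV" using xe by simp
  qed
  have inj: "inj_on (\<lambda>(j, v). (g j, v)) (\<Union>(cjoin s K))"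
  proof (rule inj_onI)
    fix x y assume x: "x \<in> \<Union>(cjoin s K)" and y: "y \<in> \<Union>(cjoin s K)"
      and e: "(\<lambda>(j, v). (g j, v)) x = (\<lambda>(j, v). (g j, v)) y"
    obtain a b where xa: "x = (a, b)" by (cases x)
    obtain c d where yc: "y = (c, d)" by (cases y)
    have "a \<in> J" "c \<in> J" using U x y xa yc by auto
    moreover have "g a = g c" "b = d" using e xa yc by auto
    ultimately have "a = c" using hg2 by metis
    then show "x = y" using xa yc \<open>b = d\<close> by simp
  qed
  have "hg_iso H (top_graph e (cjoin s' K'))" unfolding H
    by (rule hg_iso_image[OF inj]) (use reindex[OF hg1 hg2 Js Ke] K'_def in simp)
  then show ?thesis using G by blast
qed

theorem lemma3p8:
  fixes s :: nat and n :: "nat \<Rightarrow> nat" and K :: "nat \<Rightarrow> nat set set" and d :: int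
  assumes "s \<ge> 1"
    and "\<forall>i<s. nice (n i) (K i)"
    and "d = (\<Sum>i<s. cdim (K i)) + int s - 1"
    and "(\<Sum>i<s. int (n i)) - int s - 2 = 2 * d"
  shows "(\<forall>i<s. int (n i) = 2 * cdim (K i) + 3 \<and>
              K i = {F. F \<subseteq> {1..n i} \<and> int (card F) \<le> cdim (K i) + 1})
       \<and> (\<forall>e::nat. (\<forall>H\<in>famF e. \<exists>H'\<in>famG e. hg_iso H H')
                 \<and> (\<forall>H'\<in>famG e. \<exists>H\<in>famF e. hg_iso H' H))"
proof (rule conjI)
  have "(\<Sum>i<s. int (n i)) = 2 * (\<Sum>i<s. cdim (K i)) + 3 * int s" using assms(3,4) by simp
  from part1[OF assms(2) this] show "\<forall>i<s. int (n i) = 2 * cdim (K i) + 3 \<and>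
              K i = {F. F \<subseteq> {1..n i} \<and> int (card F) \<le> cdim (K i) + 1}" .
next
  show "\<forall>e::nat. (\<forall>H\<in>famF e. \<exists>H'\<in>famG e. hg_iso H H')
                 \<and> (\<forall>H'\<in>famG e. \<exists>H\<in>famF e. hg_iso H' H)"
    using F_to_G G_to_F by blast
qed

end
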